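(* Consider the most-profitable-augmenting-path algorithm (described in the context) run on an instance of the maximum-weight online bipartite left-perfect matching problem with budget $k=4$, and let $M^\star$ be a maximum-weight left-perfect matching of $G$. Then for each timestep $t\in\{1,\dots,n\}$, $p_t\ge w(u_t,M^\star(u_t))-\ell^t_{M^\star(u_t)}$.
   Context: Problem: $G=(L\cup R,E)$ is a complete bipartite graph with $n:=|L|\le|R|$ and edge weights $w:E\to\mathbb{Q}_{\ge0}$. The algorithm initially knows $R$; at timestep $t=1,\dots,n$ the vertex $u_t\in L$ arrives with all incident edges and their weights. At the end of each timestep the algorithm outputs a left-perfect matching of the revealed graph (every arrived vertex of $L$ matched), obtainable from the previous one (empty initially) by at most $4$ (re)assignments (the number of vertices of nonzero degree in the symmetric difference of the two matchings); matched vertices stay matched. Algorithm: when $u_t$ arrives, among all augmenting paths with respect to the current matching $M$ that contain $u_t$ and have length at most $3$, choose one $P$ maximizing the weight of $M\triangle P$ minus the weight of $M$, and output $M\triangle P$. Notation: $M_t$ is the matching at the beginning of timestep $t$ (output at time $t-1$; $M_1=\emptyset$, $M_{n+1}$ is the final matching); $R^t_{\mathsf{exp}}$ is the set of vertices of $R$ not covered by $M_t$; for a matching $M$, $M(u)$ is the partner of $u$. The marginal profit is $p_t:=\sum_{e\in M_{t+1}}w(e)-\sum_{e\in M_t}w(e)$. For $v\in R$, the loss $\ell^t_v:=w(M_t(v),v)-\max_{v'\in R^t_{\mathsf{exp}}}w(M_t(v),v')$ if $v$ is matched in $M_t$, and $\ell^t_v:=0$ otherwise, with the convention $\max\emptyset:=0$.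 *)

theory Defs
  imports Complex_Main
begin

text \<open>Left vertices have type 'l, right vertices type 'r; vertices of the bipartite
graph are of type ('l + 'r). Edges (and matchings) are sets of pairs (left, right).\<close>

definition is_matching :: "('l \<times> 'r) set \<Rightarrow> bool" where
  "is_matching M \<longleftrightarrow>
     (\<forall>a b b'. (a,b) \<in> M \<longrightarrow> (a,b') \<in> M \<longrightarrow> b = b') \<and>
     (\<forall>a a' b. (a,b) \<in> M \<longrightarrow> (a',b) \<in> M \<longrightarrow> a = a')"

definition left_perfect :: "'l set \<Rightarrow> 'r set \<Rightarrow> ('l \<times> 'r) set \<Rightarrow> bool" where
  "left_perfect A R M \<longleftrightarrow> is_matching M \<and> M \<subseteq> A \<times> R \<and> Domain M = A"

definition mweight :: "('l \<Rightarrow> 'r \<Rightarrow> rat) \<Rightarrow> ('l \<times> 'r) set \<Rightarrow> rat" where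
  "mweight w M = (\<Sum>(a,b)\<in>M. w a b)"

definition partner_L :: "('l \<times> 'r) set \<Rightarrow> 'l \<Rightarrow> 'r" where
  "partner_L M a = (THE b. (a,b) \<in> M)"

definition partner_R :: "('l \<times> 'r) set \<Rightarrow> 'r \<Rightarrow> 'l" where
  "partner_R M b = (THE a. (a,b) \<in> M)"

definition is_edge :: "'l set \<Rightarrow> 'r set \<Rightarrow> ('l + 'r) \<Rightarrow> ('l + 'r) \<Rightarrow> bool" where
  "is_edge A R x y \<longleftrightarrow>
     (\<exists>a b. a \<in> A \<and> b \<in> R \<and> ((x = Inl a \<and> y = Inr b) \<or> (x = Inr b \<and> y = Inl a)))"

fun to_pair :: "('l + 'r) \<Rightarrow> ('l + 'r) \<Rightarrow> 'l \<times> 'r" where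
  "to_pair (Inl a) (Inr b) = (a, b)"
| "to_pair (Inr b) (Inl a) = (a, b)"
| "to_pair _ _ = undefined"

definition pedges :: "('l + 'r) list \<Rightarrow> ('l \<times> 'r) set" where
  "pedges xs = {to_pair (xs ! i) (xs ! Suc i) | i. Suc i < length xs}"

definition covered :: "('l \<times> 'r) set \<Rightarrow> ('l + 'r) \<Rightarrow> bool" where
  "covered M x = (case x of Inl a \<Rightarrow> a \<in> Domain M | Inr b \<Rightarrow> b \<in> Range M)"

text \<open>Its length is the number
  of edges, i.e. length xs - 1.\<close>
definition augmenting_path ::
  "'l set \<Rightarrow> 'r set \<Rightarrow> ('l \<times> 'r) set \<Rightarrow> ('l + 'r) list \<Rightarrow> bool" where
  "augmenting_path A R M xs \<longleftrightarrow>
     2 \<le> length xs \<and> distinct xs \<and>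
     (\<forall>i. Suc i < length xs \<longrightarrow>
        is_edge A R (xs ! i) (xs ! Suc i) \<and>
        (to_pair (xs ! i) (xs ! Suc i) \<in> M \<longleftrightarrow> odd i)) \<and>
     \<not> covered M (hd xs) \<and> \<not> covered M (last xs)"

definition symdiff :: "'a set \<Rightarrow> 'a set \<Rightarrow> 'a set" where
  "symdiff X Y = (X - Y) \<union> (Y - X)"

definition candidate ::
  "'l set \<Rightarrow> 'r set \<Rightarrow> ('l \<times> 'r) set \<Rightarrow> 'l \<Rightarrow> ('l + 'r) list \<Rightarrow> bool" where
  "candidate A R M ut P \<longleftrightarrow>
     augmenting_path A R M P \<and> Inl ut \<in> set P \<and> length P - 1 \<le> 3"

definition path_gain ::
  "('l \<Rightarrow> 'r \<Rightarrow> rat) \<Rightarrow> ('l \<times> 'r) set \<Rightarrow> ('l + 'r) list \<Rightarrow> rat" where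
  "path_gain w M P = mweight w (symdiff M (pedges P)) - mweight w M"

text \<open>One step of the most-profitable-augmenting-path algorithm (ties broken arbitrarily).\<close>
definition alg_step ::
  "'l set \<Rightarrow> 'r set \<Rightarrow> ('l \<Rightarrow> 'r \<Rightarrow> rat) \<Rightarrow> 'l \<Rightarrow> ('l \<times> 'r) set \<Rightarrow> ('l \<times> 'r) set \<Rightarrow> bool" where
  "alg_step A R w ut M M' \<longleftrightarrow>
     (\<exists>P. candidate A R M ut P \<and>
          (\<forall>Q. candidate A R M ut Q \<longrightarrow> path_gain w M Q \<le> path_gain w M P) \<and>
          M' = symdiff M (pedges P))"

text \<open>Ms t is the matching at the beginning of timestep t, u t the vertex arriving at t.\<close>
definition alg_run ::
  "nat \<Rightarrow> (nat \<Rightarrow> 'l) \<Rightarrow> 'r set \<Rightarrow> ('l \<Rightarrow> 'r \<Rightarrow> rat) \<Rightarrow> (nat \<Rightarrow> ('l \<times> 'r) set) \<Rightarrow> bool" where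
  "alg_run n u R w Ms \<longleftrightarrow>
     Ms 1 = {} \<and>
     (\<forall>t\<in>{1..n}. alg_step (u ` {1..t}) R w (u t) (Ms t) (Ms (Suc t)))"

definition R_exp :: "'r set \<Rightarrow> ('l \<times> 'r) set \<Rightarrow> 'r set" where
  "R_exp R M = R - Range M"

text \<open>Loss of v with respect to the current matching M (with max of empty set = 0).\<close>
definition loss ::
  "'r set \<Rightarrow> ('l \<Rightarrow> 'r \<Rightarrow> rat) \<Rightarrow> ('l \<times> 'r) set \<Rightarrow> 'r \<Rightarrow> rat" where
  "loss R w M v =
     (if v \<in> Range M then
        w (partner_R M v) v -
        (if R_exp R M = {} then 0 else Max ((\<lambda>v'. w (partner_R M v) v') ` R_exp R M))
      else 0)"

end

theory Submission imports Defs begin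
lemma edge_cases: "is_edge A R x y \<Longrightarrow> (\<exists>a b. a\<in>A \<and> b\<in>R \<and> x = Inl a \<and> y = Inr b) \<or> (\<exists>a b. a\<in>A \<and> b\<in>R \<and> x = Inr b \<and> y = Inl a)"
  by (auto simp: is_edge_def)

lemma pedges_2: "pedges [x0,x1] = {to_pair x0 x1}"
  by (auto simp: pedges_def)

lemma pedges_4: "pedges [x0,x1,x2,x3] = {to_pair x0 x1, to_pair x1 x2, to_pair x2 x3}"
  unfolding pedges_def
  apply (auto simp: less_Suc_eq numeral_eq_Suc)
    apply (rule exI[of _ 0]; simp)
   apply (rule exI[of _ 1]; simp)
  apply (rule exI[of _ 2]; simp)
  done

lemma aug_len2:
  assumes "augmenting_path A R M [x0,x1]"
  shows "\<exists>a b. a\<in>A \<and> b\<in>R \<and> a \<notin> Domain M \<and> b \<notin> Range M \<and> pedges [x0,x1] = {(a,b)}"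
proof -
  have H: "is_edge A R x0 x1" "\<not> covered M x0" "\<not> covered M x1"
    using assms unfolding augmenting_path_def by (auto dest: spec[of _ 0])
  show ?thesis using edge_cases[OF H(1)] H(2,3) by (auto simp: pedges_2 covered_def)
qed

lemma aug_len3:
  assumes "augmenting_path A R M [x0,x1,x2]"
  shows False
proof -
  have H: "is_edge A R x1 x2" "to_pair x1 x2 \<in> M" "\<not> covered M x2"
    using assms unfolding augmenting_path_def by (auto dest: spec[of _ 1])
  show ?thesis using edge_cases[OF H(1)] H(2,3) by (auto simp: covered_def)
qed

lemma aug_len4:
  assumes "augmenting_path A R M [x0,x1,x2,x3]"
  shows "\<exists>a b a' b'. a\<in>A \<and> a'\<in>A \<and> b\<in>R \<and> b'\<in>R \<and> (a,b)\<in>M \<and> a'\<notin>Domain M \<and> b'\<notin>Range M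
     \<and> pedges [x0,x1,x2,x3] = {(a',b),(a,b),(a,b')}"
proof -
  have H: "\<forall>i. Suc i < 4 \<longrightarrow> is_edge A R ([x0,x1,x2,x3] ! i) ([x0,x1,x2,x3] ! Suc i) \<and>
        (to_pair ([x0,x1,x2,x3] ! i) ([x0,x1,x2,x3] ! Suc i) \<in> M \<longleftrightarrow> odd i)"
    and C: "\<not> covered M x0" "\<not> covered M x3"
    using assms unfolding augmenting_path_def by auto
  have E0: "is_edge A R x0 x1" "to_pair x0 x1 \<notin> M" using H[rule_format, of 0] by auto
  have E1: "is_edge A R x1 x2" "to_pair x1 x2 \<in> M" using H[rule_format, of 1] by auto
  have E2: "is_edge A R x2 x3" "to_pair x2 x3 \<notin> M" using H[rule_format, of 2] by auto
  show ?thesis using edge_cases[OF E0(1)] edge_cases[OF E1(1)] edge_cases[OF E2(1)] E0(2) E1(2) E2(2) C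
    apply (auto simp: covered_def pedges_4)
     apply (rule_tac x=ab in exI; simp; rule_tac x=ba in exI; rule_tac x=a in exI; simp; rule_tac x=bb in exI; auto)
    apply (rule_tac x=aa in exI; simp; rule_tac x=bb in exI; rule_tac x=ab in exI; simp; rule_tac x=b in exI; auto)
    done
qed

lemma len2_cases: "length xs = 2 \<Longrightarrow> \<exists>a b. xs = [a,b]"
  by (auto simp: numeral_eq_Suc length_Suc_conv)
lemma len3_cases: "length xs = 3 \<Longrightarrow> \<exists>a b c. xs = [a,b,c]"
  by (auto simp: numeral_eq_Suc length_Suc_conv)
lemma len4_cases: "length xs = 4 \<Longrightarrow> \<exists>a b c d. xs = [a,b,c,d]"
  by (auto simp: numeral_eq_Suc length_Suc_conv)

lemma match_swap: "is_matching M \<Longrightarrow> (a,b)\<in>M \<Longrightarrow> a'\<notin>Domain M \<Longrightarrow> b'\<notin>Range M \<Longrightarrow>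
   is_matching (insert (a',b) (insert (a,b') (M - {(a,b)})))"
  unfolding is_matching_def by (auto; blast)

lemma match_add: "is_matching M \<Longrightarrow> a\<notin>Domain M \<Longrightarrow> b\<notin>Range M \<Longrightarrow> is_matching (insert (a,b) M)"
  unfolding is_matching_def by blast

lemma aug_step_inv:
  assumes M: "is_matching M" "M \<subseteq> B \<times> R" "B \<subseteq> A" and P: "augmenting_path A R M P" "length P - 1 \<le> 3"
  shows "is_matching (symdiff M (pedges P)) \<and> symdiff M (pedges P) \<subseteq> A \<times> R"
proof -
  have MA: "M \<subseteq> A \<times> R" using M by blast
  have "length P = 2 \<or> length P = 3 \<or> length P = 4" using P unfolding augmenting_path_def by linarith
  moreover
  { assume "length P = 2"
    then obtain x0 x1 where eq: "P = [x0,x1]" using len2_cases by blast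
    obtain a b where ab: "a\<in>A" "b\<in>R" "a \<notin> Domain M" "b \<notin> Range M" "pedges P = {(a,b)}"
      using aug_len2[of A R M x0 x1] P(1) unfolding eq by blast
    have "(a,b) \<notin> M" using ab(3) by blast
    then have sd: "symdiff M (pedges P) = insert (a,b) M" unfolding ab(5) symdiff_def by blast
    have ?thesis unfolding sd using match_add[OF M(1) ab(3,4)] MA ab(1,2) by blast }
  moreover
  { assume "length P = 3"
    then obtain x0 x1 x2 where eq: "P = [x0,x1,x2]" using len3_cases by blast
    then have False using aug_len3[of A R M x0 x1 x2] P(1) by blast }
  moreover
  { assume "length P = 4"
    then obtain x0 x1 x2 x3 where eq: "P = [x0,x1,x2,x3]" using len4_cases by blast
    obtain a b a' b' where ab: "a\<in>A" "a'\<in>A" "b\<in>R" "b'\<in>R" "(a,b)\<in>M" "a'\<notin>Domain M" "b'\<notin>Range M"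
       "pedges P = {(a',b),(a,b),(a,b')}"
      using aug_len4[of A R M x0 x1 x2 x3] P(1) unfolding eq by blast
    have n1: "(a',b) \<notin> M" "(a,b') \<notin> M" using ab(6,7) by blast+
    have sd: "symdiff M (pedges P) = insert (a',b) (insert (a,b') (M - {(a,b)}))"
      unfolding ab(8) symdiff_def using ab(5) n1 by blast
    have ?thesis unfolding sd using match_swap[OF M(1) ab(5,6,7)] MA ab(1-4) by blast }
  ultimately show ?thesis by blast
qed

lemma mweight_insert: "finite M \<Longrightarrow> (a,b) \<notin> M \<Longrightarrow> mweight w (insert (a,b) M) = w a b + mweight w M"
  by (simp add: mweight_def)

lemma mweight_remove: "finite M \<Longrightarrow> (a,b) \<in> M \<Longrightarrow> mweight w (M - {(a,b)}) = mweight w M - w a b"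
  unfolding mweight_def by (simp add: sum_diff1)

lemma all_lt2: "(\<forall>i. Suc i < length [x0,x1] \<longrightarrow> Q i) \<longleftrightarrow> Q 0"
  by auto
lemma all_lt4: "(\<forall>i. Suc i < length [x0,x1,x2,x3] \<longrightarrow> Q i) \<longleftrightarrow> Q 0 \<and> Q 1 \<and> Q 2"
  by (auto simp: less_Suc_eq numeral_2_eq_2)

theorem lemma3:
  fixes n :: nat and u :: "nat \<Rightarrow> 'l" and R :: "'r set"
    and w :: "'l \<Rightarrow> 'r \<Rightarrow> rat" and Ms :: "nat \<Rightarrow> ('l \<times> 'r) set"
    and Mstar :: "('l \<times> 'r) set" and t :: nat
  assumes "finite R"
    and "n \<le> card R"
    and "inj_on u {1..n}"
    and "\<forall>a\<in>u ` {1..n}. \<forall>b\<in>R. 0 \<le> w a b"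
    and "alg_run n u R w Ms"
    and "left_perfect (u ` {1..n}) R Mstar"
    and "\<forall>M. left_perfect (u ` {1..n}) R M \<longrightarrow> mweight w M \<le> mweight w Mstar"
    and "t \<in> {1..n}"
  shows "mweight w (Ms (Suc t)) - mweight w (Ms t)
           \<ge> w (u t) (partner_L Mstar (u t)) - loss R w (Ms t) (partner_L Mstar (u t))"
proof -
  note run = assms(5)[unfolded alg_run_def]
  have inv: "Suc k \<le> n \<Longrightarrow> is_matching (Ms (Suc k)) \<and> Ms (Suc k) \<subseteq> u ` {1..k} \<times> R" for k
  proof (induction k)
    case 0
    have "Ms 1 = {}" using run by blast
    then show ?case by (simp add: is_matching_def)
  next
    case (Suc k)
    then have IH: "is_matching (Ms (Suc k)) \<and> Ms (Suc k) \<subseteq> u ` {1..k} \<times> R" by simp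
    have "Suc k \<in> {1..n}" using Suc.prems by simp
    then have "alg_step (u ` {1..Suc k}) R w (u (Suc k)) (Ms (Suc k)) (Ms (Suc (Suc k)))"
      using run by blast
    then obtain P where P: "candidate (u ` {1..Suc k}) R (Ms (Suc k)) (u (Suc k)) P"
      "Ms (Suc (Suc k)) = symdiff (Ms (Suc k)) (pedges P)"
      unfolding alg_step_def by blast
    have sub: "u ` {1..k} \<subseteq> u ` {1..Suc k}" by auto
    show ?case using aug_step_inv[OF conjunct1[OF IH] conjunct2[OF IH] sub] P
      unfolding candidate_def by auto
  qed
  define M where "M = Ms t"
  define k where "k = t - 1"
  have tk: "t = Suc k" using assms(8) k_def by auto
  have Mm: "is_matching M" and Msub: "M \<subseteq> u ` {1..k} \<times> R"
    using inv[of k] tk assms(8) M_def by auto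
  have finM: "finite M" using Msub assms(1) by (meson finite_SigmaI finite_atLeastAtMost finite_imageI finite_subset)
  have utD: "u t \<notin> Domain M"
  proof
    assume "u t \<in> Domain M"
    then obtain s where s: "s \<in> {1..k}" "u t = u s" using Msub by blast
    have sn: "s \<in> {1..n}" using s(1) assms(8) tk by simp
    have "t = s" using inj_onD[OF assms(3) s(2) assms(8) sn] .
    then show False using s(1) tk by simp
  qed
  have injf: "inj_on fst M" using Mm unfolding is_matching_def inj_on_def by force
  have injs: "inj_on snd M" using Mm unfolding is_matching_def inj_on_def by force
  have "card (Range M) = card M" using injs by (simp add: Range_snd card_image)
  also have "\<dots> = card (Domain M)" using injf by (simp add: Domain_fst card_image)
  also have "\<dots> \<le> card (u ` {1..k})" using Msub by (intro card_mono) auto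
  also have "\<dots> \<le> k" using card_image_le[of "{1..k}" u] by simp
  finally have cardR: "card (Range M) < card R" using assms(2,8) tk by simp
  have RangeR: "Range M \<subseteq> R" using Msub by auto
  have Rexp_ne: "R_exp R M \<noteq> {}"
  proof
    assume "R_exp R M = {}"
    then have "R \<subseteq> Range M" unfolding R_exp_def by auto
    then have "card R \<le> card (Range M)" using RangeR assms(1) by (meson card_mono finite_subset)
    then show False using cardR by simp
  qed
  have finRexp: "finite (R_exp R M)" using assms(1) unfolding R_exp_def by simp
  define vs where "vs = partner_L Mstar (u t)"
  have "u t \<in> Domain Mstar" using assms(6,8) unfolding left_perfect_def by auto
  then obtain b where b: "(u t, b) \<in> Mstar" by auto
  have vsM: "(u t, vs) \<in> Mstar" unfolding vs_def partner_L_def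
    by (rule theI[of _ b]) (use b assms(6) in \<open>auto simp: left_perfect_def is_matching_def\<close>)
  have vsR: "vs \<in> R" using vsM assms(6) unfolding left_perfect_def by auto
  define A where "A = u ` {1..t}"
  have utA: "u t \<in> A" using assms(8) A_def tk by auto
  have DomA: "Domain M \<subseteq> A" using Msub A_def tk by auto
  have "alg_step A R w (u t) M (Ms (Suc t))" using run assms(8) A_def M_def by blast
  then obtain P where P: "candidate A R M (u t) P"
      "\<And>Q. candidate A R M (u t) Q \<Longrightarrow> path_gain w M Q \<le> path_gain w M P"
      "Ms (Suc t) = symdiff M (pedges P)"
    unfolding alg_step_def by blast
  have lhs: "mweight w (Ms (Suc t)) - mweight w (Ms t) = path_gain w M P"
    unfolding path_gain_def P(3) M_def by simp
  show ?thesis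
  proof (cases "vs \<in> Range M")
    case False
    define Q where "Q = [Inl (u t), Inr vs]"
    have cand: "candidate A R M (u t) Q"
      unfolding candidate_def augmenting_path_def Q_def all_lt2
      using utA vsR utD False by (auto simp: is_edge_def covered_def)
    have nin: "(u t, vs) \<notin> M" using utD by blast
    have sdq: "symdiff M (pedges Q) = insert (u t, vs) M"
      unfolding Q_def pedges_2 symdiff_def using nin by auto
    have "path_gain w M Q = w (u t) vs"
      unfolding path_gain_def sdq mweight_insert[OF finM nin] by simp
    then show ?thesis using P(2)[OF cand] lhs False unfolding loss_def vs_def[symmetric] M_def[symmetric] by simp
  next
    case True
    define a where "a = partner_R M vs"
    obtain a0 where a0: "(a0, vs) \<in> M" using True by auto
    have aM: "(a, vs) \<in> M" unfolding a_def partner_R_def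
      by (rule theI[of _ a0]) (use a0 Mm in \<open>auto simp: is_matching_def\<close>)
    obtain v' where v': "v' \<in> R_exp R M" "w a v' = Max ((\<lambda>v'. w a v') ` R_exp R M)"
      using Max_in[of "(\<lambda>v'. w a v') ` R_exp R M"] finRexp Rexp_ne by (metis (no_types, lifting) empty_is_image finite_imageI imageE)
    have v'R: "v' \<in> R" "v' \<notin> Range M" using v' unfolding R_exp_def by auto
    have aD: "a \<in> Domain M" using aM by auto
    define Q where "Q = [Inl (u t), Inr vs, Inl a, Inr v']"
    have cand: "candidate A R M (u t) Q"
      unfolding candidate_def augmenting_path_def Q_def all_lt4
      using utA vsR utD v'R aM aD DomA True by (auto simp: is_edge_def covered_def)
    have sd: "symdiff M (pedges Q) = insert (u t, vs) (insert (a, v') (M - {(a, vs)}))"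
      unfolding Q_def pedges_4 symdiff_def using aM utD v'R by auto
    have "path_gain w M Q = w (u t) vs + (w a v' + (mweight w M - w a vs)) - mweight w M"
    proof -
      have f1: "finite (M - {(a, vs)})" using finM by simp
      have f2: "finite (insert (a, v') (M - {(a, vs)}))" using finM by simp
      have n2: "(a, v') \<notin> M - {(a, vs)}" using v'R by blast
      have n1: "(u t, vs) \<notin> insert (a, v') (M - {(a, vs)})" using utD aD by blast
      show ?thesis unfolding path_gain_def sd mweight_insert[OF f2 n1] mweight_insert[OF f1 n2]
          mweight_remove[OF finM aM] ..
    qed
    then have g: "path_gain w M Q = w (u t) vs - (w a vs - w a v')" by simp
    have "loss R w M vs = w a vs - w a v'" unfolding loss_def a_def[symmetric] using True Rexp_ne v' by simp
    then show ?thesis using P(2)[OF cand] lhs g unfolding vs_def[symmetric] M_def[symmetric] by simp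
  qed
qed

end
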